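(* Let $n\geq 1$, $g\geq 1$, $r\geq 1$. Let $C_1,\dots,C_n\subset GL_r(\mathbb{C})$ be conjugacy classes whose collection of eigenvalues is multiplicatively generic and such that $\prod_{i=1}^n\det(C_i)=1$. If $g=1$, assume moreover that at least one of the partitions $P^i$ attached to $C_i$ is not the one-part partition $(r)$. Then there exist $A_k,B_k\in GL_r(\mathbb{C})$ ($k=1,\dots,g$) and $T_i\in C_i$ ($i=1,\dots,n$) such that $$\prod_{k=1}^g (A_k,B_k)\prod_{i=1}^n T_i=\mathrm{Id}_r,\qquad (A_k,B_k):=A_kB_kA_k^{-1}B_k^{-1},$$ and the matrices $A_1,\dots,A_g,B_1,\dots,B_g,T_1,\dots,T_n$ have no common invariant subspace other than $0$ and $\mathbb{C}^r$.
   Context: Partitions: a partition $P=(m_1\geq\dots\geq m_\ell>0)$ of $r$ has conjugate $\widehat P=(n_1,\dots,n_{m_1})$, $n_j=\#\{k:m_k\ge j\}$; the union $P\cup Q$ collects all parts of $P$ and $Q$ in non-increasing order. Partition attached to a conjugacy class $C\subset GL_r(\mathbb{C})$ with distinct eigenvalues $\lambda_1,\dots,\lambda_e$: let $P^{\lambda_j}$ record the sizes of the Jordan blocks of eigenvalue $\lambda_j$; set $P:=\widehat{P}^{\lambda_1}\cup\dots\cup\widehat{P}^{\lambda_e}$. Write $P^i$ for the partition attached to $C_i$. Multiplicative genericity: list the eigenvalues of $C_i$ with multiplicity as $\lambda_{i,1},\dots,\lambda_{i,r}$; the collection is multiplicatively generic if for every $1\le m<r$ and all subsets $\Lambda_1,\dots,\Lambda_n\subset\{1,\dots,r\}$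 of size $m$, $\prod_{i}\prod_{k\in\Lambda_i}\lambda_{i,k}\neq1$. *)

theory Defs
  imports "Jordan_Normal_Form.Jordan_Normal_Form"
begin

definition mat_prod_list :: "nat \<Rightarrow> complex mat list \<Rightarrow> complex mat" where
  "mat_prod_list r Ms = foldr (\<lambda>M acc. M * acc) Ms (1\<^sub>m r)"

definition inv_mat :: "nat \<Rightarrow> complex mat \<Rightarrow> complex mat" where
  "inv_mat r A = (SOME B. B \<in> carrier_mat r r \<and> A * B = 1\<^sub>m r \<and> B * A = 1\<^sub>m r)"

definition commutator :: "nat \<Rightarrow> complex mat \<Rightarrow> complex mat \<Rightarrow> complex mat" where
  "commutator r A B = A * B * inv_mat r A * inv_mat r B"

definition GL :: "nat \<Rightarrow> complex mat set" where
  "GL r = {A \<in> carrier_mat r r. invertible_mat A}"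

definition conj_class :: "nat \<Rightarrow> complex mat \<Rightarrow> complex mat set" where
  "conj_class r M = {T \<in> GL r. similar_mat T M}"

definition eig_list :: "complex mat \<Rightarrow> complex list" where
  "eig_list A = (SOME xs. char_poly A = (\<Prod>a\<leftarrow>xs. [:- a, 1:]))"

(* Multiplicative genericity of the eigenvalues of C_1..C_n (classes of M 0 .. M (n-1)) *)
definition mult_generic :: "nat \<Rightarrow> nat \<Rightarrow> (nat \<Rightarrow> complex mat) \<Rightarrow> bool" where
  "mult_generic r n M \<longleftrightarrow>
     (\<forall>m. 1 \<le> m \<and> m < r \<longrightarrow>
       (\<forall>\<Lambda> :: nat \<Rightarrow> nat set.
          (\<forall>i<n. \<Lambda> i \<subseteq> {0..<r} \<and> card (\<Lambda> i) = m) \<longrightarrow>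
          (\<Prod>i<n. \<Prod>k\<in>\<Lambda> i. eig_list (M i) ! k) \<noteq> 1))"

definition jordan_blocks :: "complex mat \<Rightarrow> (nat \<times> complex) list" where
  "jordan_blocks A = (SOME n_as. jordan_nf A n_as)"

definition block_partition :: "complex mat \<Rightarrow> complex \<Rightarrow> nat multiset" where
  "block_partition A c = mset (map fst (filter (\<lambda>p. snd p = c) (jordan_blocks A)))"

definition conj_partition :: "nat multiset \<Rightarrow> nat multiset" where
  "conj_partition P =
     mset (map (\<lambda>j. size (filter_mset (\<lambda>k. j \<le> k) P)) [1..<Max (insert 0 (set_mset P)) + 1])"

definition attached_partition :: "complex mat \<Rightarrow> nat multiset" where
  "attached_partition A =
     (\<Sum>c\<in>snd ` set (jordan_blocks A). conj_partition (block_partition A c))"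

definition is_subspace :: "nat \<Rightarrow> complex vec set \<Rightarrow> bool" where
  "is_subspace r W \<longleftrightarrow> W \<subseteq> carrier_vec r \<and> 0\<^sub>v r \<in> W \<and>
     (\<forall>v\<in>W. \<forall>w\<in>W. v + w \<in> W) \<and> (\<forall>c. \<forall>v\<in>W. c \<cdot>\<^sub>v v \<in> W)"

definition common_invariant :: "complex mat set \<Rightarrow> complex vec set \<Rightarrow> bool" where
  "common_invariant S W \<longleftrightarrow> (\<forall>X\<in>S. \<forall>w\<in>W. X *\<^sub>v w \<in> W)"

end

theory Submission
  imports Defs "HOL-Combinatorics.List_Permutation" "Jordan_Normal_Form.Jordan_Normal_Form_Existence" "Jordan_Normal_Form.Schur_Decomposition"
begin


definition diagm :: "nat \<Rightarrow> (nat \<Rightarrow> complex) \<Rightarrow> complex mat" where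
  "diagm r f = mat r r (\<lambda>(i,j). if i = j then f i else 0)"

lemma diagm_carrier[simp]: "diagm r f \<in> carrier_mat r r"
  unfolding diagm_def by auto

lemma diagm_index[simp]: "i < r \<Longrightarrow> j < r \<Longrightarrow> diagm r f $$ (i,j) = (if i = j then f i else 0)"
  unfolding diagm_def by auto

lemma diagm_dim[simp]: "dim_row (diagm r f) = r" "dim_col (diagm r f) = r"
  unfolding diagm_def by auto

lemma perm_sim:
  assumes bij: "bij_betw p {..<r} {..<r}"
  shows "similar_mat (diagm r (\<lambda>i. f (p i))) (diagm r f)"
proof -
  define P :: "complex mat" where "P = mat r r (\<lambda>(i,j). if j = p i then 1 else 0)"
  define Q :: "complex mat" where "Q = mat r r (\<lambda>(i,j). if i = p j then 1 else 0)"
  have pr: "i < r \<Longrightarrow> p i < r" for i using bij bij_betwE by blast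
  have inj: "i < r \<Longrightarrow> l < r \<Longrightarrow> p i = p l \<Longrightarrow> i = l" for i l
    using bij unfolding bij_betw_def inj_on_def by blast
  have reidx: "(\<Sum>j<r. h (p j)) = (\<Sum>k<r. h k)" for h :: "nat \<Rightarrow> complex"
    using sum.reindex_bij_betw[OF bij] by blast
  have PQ: "P * Q = 1\<^sub>m r"
  proof (rule eq_matI)
    fix i l assume i: "i < dim_row (1\<^sub>m r :: complex mat)" and l: "l < dim_col (1\<^sub>m r :: complex mat)"
    hence i: "i < r" and l: "l < r" by auto
    have "(P * Q) $$ (i,l) = (\<Sum>j<r. P $$ (i,j) * Q $$ (j,l))"
      using i l unfolding P_def Q_def by (auto simp: scalar_prod_def atLeast0LessThan)
    also have "\<dots> = (\<Sum>j<r. if j = p i then (if j = p l then 1 else 0) else 0)"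
      by (rule sum.cong, auto simp: P_def Q_def i l)
    also have "\<dots> = (if p i = p l then 1 else 0)" using pr[OF i] by (simp add: sum.delta')
    also have "\<dots> = 1\<^sub>m r $$ (i,l)" using inj[OF i l] i l by auto
    finally show "(P * Q) $$ (i,l) = 1\<^sub>m r $$ (i,l)" .
  qed (auto simp: P_def Q_def)
  have QP: "Q * P = 1\<^sub>m r"
  proof (rule eq_matI)
    fix i l assume i: "i < dim_row (1\<^sub>m r :: complex mat)" and l: "l < dim_col (1\<^sub>m r :: complex mat)"
    hence i: "i < r" and l: "l < r" by auto
    have "(Q * P) $$ (i,l) = (\<Sum>j<r. Q $$ (i,j) * P $$ (j,l))"
      using i l unfolding P_def Q_def by (auto simp: scalar_prod_def atLeast0LessThan)
    also have "\<dots> = (\<Sum>j<r. (\<lambda>k. if i = k then (if l = k then 1 else 0) else 0) (p j))"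
      by (rule sum.cong, auto simp: P_def Q_def i l pr)
    also have "\<dots> = (\<Sum>k<r. (if i = k then (if l = k then 1 else 0) else 0))" by (rule reidx)
    also have "\<dots> = 1\<^sub>m r $$ (i,l)" using i l by (simp add: sum.delta)
    finally show "(Q * P) $$ (i,l) = 1\<^sub>m r $$ (i,l)" .
  qed (auto simp: P_def Q_def)
  have eq: "diagm r (\<lambda>i. f (p i)) = P * diagm r f * Q"
  proof (rule eq_matI)
    fix i l assume i: "i < dim_row (P * diagm r f * Q)" and l: "l < dim_col (P * diagm r f * Q)"
    hence i: "i < r" and l: "l < r" by (auto simp: P_def Q_def)
    have "(P * diagm r f) $$ (i,k) = (if k = p i then f (p i) else 0)" if k: "k < r" for k
    proof -
      have "(P * diagm r f) $$ (i,k) = (\<Sum>j<r. P $$ (i,j) * diagm r f $$ (j,k))"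
        using i k unfolding P_def by (auto simp: scalar_prod_def atLeast0LessThan)
      also have "\<dots> = (\<Sum>j<r. if j = p i then (if j = k then f j else 0) else 0)"
        by (rule sum.cong, auto simp: P_def i k)
      also have "\<dots> = (if k = p i then f (p i) else 0)" using pr[OF i] by (simp add: sum.delta')
      finally show ?thesis .
    qed
    hence "(P * diagm r f * Q) $$ (i,l) = (\<Sum>k<r. (if k = p i then f (p i) else 0) * Q $$ (k,l))"
      using i l unfolding Q_def by (auto simp: scalar_prod_def atLeast0LessThan P_def intro!: sum.cong)
    also have "\<dots> = (\<Sum>k<r. if k = p i then f (p i) * (if p i = p l then 1 else 0) else 0)"
      by (rule sum.cong, auto simp: Q_def l)
    also have "\<dots> = f (p i) * (if p i = p l then 1 else 0)" using pr[OF i] by (simp add: sum.delta')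
    also have "\<dots> = diagm r (\<lambda>i. f (p i)) $$ (i,l)" using inj[OF i l] i l by auto
    finally show "diagm r (\<lambda>i. f (p i)) $$ (i,l) = (P * diagm r f * Q) $$ (i,l)" by simp
  qed (auto simp: P_def Q_def)
  have "similar_mat_wit (diagm r (\<lambda>i. f (p i))) (diagm r f) P Q"
    unfolding similar_mat_wit_def Let_def using PQ QP eq by (auto simp: P_def Q_def)
  thus ?thesis unfolding similar_mat_def by blast
qed



lemma order_prod_lin: "order a (\<Prod>x\<leftarrow>xs. [:-x, 1:]) = count (mset xs) (a::complex)"
proof (induct xs)
  case (Cons x xs)
  have nz: "(\<Prod>x\<leftarrow>xs. [:-x, 1:]) \<noteq> 0" by (auto simp: prod_list_zero_iff)
  have "order a (\<Prod>x\<leftarrow>x#xs. [:-x, 1:]) = order a ([:-x,1:]) + order a (\<Prod>x\<leftarrow>xs. [:-x, 1:])"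
    unfolding prod_list.Cons list.map(2) by (rule order_mult, unfold mult_eq_0_iff, insert nz, auto)
  also have "order a ([:-x,1:]) = (if x = a then 1 else 0)"
    using order_linear_power[of a "-x" 1] by auto
  finally show ?case using Cons by auto
qed simp

lemma jordan_matrix_ones: "jordan_matrix (map (\<lambda>a. (1,a)) cs) = diagm (length cs) (\<lambda>i. cs ! i)"
proof (induct cs)
  case Nil
  show ?case by (rule eq_matI, auto simp: jordan_matrix_def diagm_def)
next
  case (Cons c cs)
  have sl: "sum_list (map fst (map (\<lambda>a. (1::nat, a)) cs)) = length cs" by (induct cs, auto)
  show ?case unfolding list.map(2) jordan_matrix_Cons Cons sl
    by (rule eq_matI, auto simp: jordan_block_def nth_Cons')
qed

lemma upper_tri_distinct_sim:
  fixes U :: "complex mat"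
  assumes U: "U \<in> carrier_mat r r" and ut: "upper_triangular U" and dist: "distinct (diag_mat U)"
    and bs: "mset bs = mset (diag_mat U)"
  shows "similar_mat U (diagm r (\<lambda>i. bs ! i))"
proof -
  have cp: "char_poly U = (\<Prod>a\<leftarrow>diag_mat U. [:-a, 1:])"
    by (rule char_poly_upper_triangular[OF U ut])
  from jordan_nf_exists[OF U cp] obtain n_as where jnf: "jordan_nf U n_as" by blast
  have ord: "order a (char_poly U) = sum_list (map fst (filter (\<lambda>na. snd na = a) n_as))" for a
    by (rule jordan_nf_order[OF jnf])
  have cnt: "count (mset (diag_mat U)) a \<le> 1" for a using dist by (simp add: distinct_count_atmost_1)
  have ones: "fst x = 1" if x: "x \<in> set n_as" for x
  proof -
    obtain k a where xa: "x = (k,a)" by force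
    have "k \<noteq> 0" using jnf x xa unfolding jordan_nf_def by force
    moreover have "k \<le> sum_list (map fst (filter (\<lambda>na. snd na = a) n_as))"
      using x xa by (intro member_le_sum_list, auto intro!: image_eqI[of _ fst "(k,a)"])
    moreover have "sum_list (map fst (filter (\<lambda>na. snd na = a) n_as)) \<le> 1"
      using ord[of a] cp order_prod_lin[of a "diag_mat U"] cnt[of a] by simp
    ultimately show ?thesis using xa by simp
  qed
  define cs where "cs = map snd n_as"
  have nas: "n_as = map (\<lambda>a. (1,a)) cs" unfolding cs_def using ones
    by (induct n_as, auto simp: prod_eq_iff)
  have sl1: "\<forall>x\<in>set ys. fst x = 1 \<Longrightarrow> sum_list (map fst ys) = length ys" for ys :: "(nat \<times> complex) list"
    by (induct ys, auto)
  have "count (mset cs) a = count (mset (diag_mat U)) a" for a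
  proof -
    have "count (mset cs) a = length (filter (\<lambda>na. snd na = a) n_as)"
      unfolding cs_def by (induct n_as, auto)
    also have "\<dots> = sum_list (map fst (filter (\<lambda>na. snd na = a) n_as))"
      using ones by (subst sl1, auto)
    also have "\<dots> = count (mset (diag_mat U)) a" using ord[of a] cp order_prod_lin by simp
    finally show ?thesis .
  qed
  hence mcs: "mset cs = mset bs" using bs by (simp add: multiset_eqI)
  have lbs: "length bs = r" using bs U by (metis size_mset diag_mat_def length_map length_upt carrier_matD(1) diff_zero)
  have lcs: "length cs = r" using mcs lbs by (metis size_mset)
  from permutation_Ex_bij[OF mcs] obtain f where f: "bij_betw f {..<length cs} {..<length bs}"
    and fi: "\<forall>i<length cs. cs ! i = bs ! (f i)" by blast
  have "similar_mat U (jordan_matrix n_as)" using jnf unfolding jordan_nf_def by auto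
  also have "jordan_matrix n_as = diagm r (\<lambda>i. cs ! i)" unfolding nas jordan_matrix_ones lcs ..
  also have "\<dots> = diagm r (\<lambda>i. bs ! (f i))" unfolding diagm_def using fi lcs
    by (intro eq_matI, auto)
  finally have "similar_mat U (diagm r (\<lambda>i. bs ! (f i)))" .
  moreover have "similar_mat (diagm r (\<lambda>i. bs ! (f i))) (diagm r (\<lambda>i. bs ! i))"
    by (rule perm_sim, insert f lcs lbs, auto)
  ultimately show ?thesis by (rule similar_mat_trans)
qed



lemma upper_tri_mult:
  fixes A B :: "complex mat"
  assumes A: "A \<in> carrier_mat r r" and B: "B \<in> carrier_mat r r"
    and uA: "upper_triangular A" and uB: "upper_triangular B"
  shows "upper_triangular (A * B)" "\<And>j. j < r \<Longrightarrow> (A * B) $$ (j,j) = A $$ (j,j) * B $$ (j,j)"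
proof -
  have ix: "i < r \<Longrightarrow> j < r \<Longrightarrow> (A * B) $$ (i,j) = (\<Sum>k<r. A $$ (i,k) * B $$ (k,j))" for i j
    using A B by (auto simp: scalar_prod_def atLeast0LessThan)
  have zA: "i < r \<Longrightarrow> k < i \<Longrightarrow> A $$ (i,k) = 0" for i k using uA A by auto
  have zB: "k < r \<Longrightarrow> j < k \<Longrightarrow> B $$ (k,j) = 0" for k j using uB B by auto
  show "upper_triangular (A * B)"
  proof (rule upper_triangularI)
    fix i j assume j: "j < i" and i: "i < dim_row (A * B)"
    hence i: "i < r" using A by auto
    have "(A * B) $$ (i,j) = (\<Sum>k<r. A $$ (i,k) * B $$ (k,j))" using ix i j by auto
    also have "\<dots> = (\<Sum>k<r. 0)"
    proof (rule sum.cong[OF refl])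
      fix k assume k: "k \<in> {..<r}"
      show "A $$ (i,k) * B $$ (k,j) = 0"
      proof (cases "k < i")
        case True thus ?thesis using zA i by auto
      next
        case False thus ?thesis using zB k j by auto
      qed
    qed
    finally show "(A * B) $$ (i,j) = 0" by simp
  qed
  fix j assume j: "j < r"
  have "(A * B) $$ (j,j) = (\<Sum>k<r. A $$ (j,k) * B $$ (k,j))" using ix j by auto
  also have "\<dots> = (\<Sum>k<r. if k = j then A $$ (j,j) * B $$ (j,j) else 0)"
  proof (rule sum.cong[OF refl])
    fix k assume k: "k \<in> {..<r}"
    show "A $$ (j,k) * B $$ (k,j) = (if k = j then A $$ (j,j) * B $$ (j,j) else 0)"
      using zA[of j k] zB[of k j] k j by (cases "k < j"; cases "k = j"; auto)
  qed
  also have "\<dots> = A $$ (j,j) * B $$ (j,j)" using j by (simp add: sum.delta')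
  finally show "(A * B) $$ (j,j) = A $$ (j,j) * B $$ (j,j)" .
qed

lemma mat_prod_list_Cons: "mat_prod_list r (T # Ts) = T * mat_prod_list r Ts"
  unfolding mat_prod_list_def by simp

lemma mat_prod_list_carrier: "(\<forall>T\<in>set Ts. T \<in> carrier_mat r r) \<Longrightarrow> mat_prod_list r Ts \<in> carrier_mat r r"
  by (induct Ts, auto simp: mat_prod_list_def)

lemma mat_prod_list_upper:
  assumes "\<forall>T\<in>set Ts. T \<in> carrier_mat r r \<and> upper_triangular (T :: complex mat)"
  shows "upper_triangular (mat_prod_list r Ts) \<and>
    (\<forall>j<r. mat_prod_list r Ts $$ (j,j) = (\<Prod>T\<leftarrow>Ts. T $$ (j,j)))"
  using assms
proof (induct Ts)
  case Nil
  show ?case by (auto simp: mat_prod_list_def upper_triangular_def)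
next
  case (Cons T Ts)
  have c: "mat_prod_list r Ts \<in> carrier_mat r r" using Cons(2) by (intro mat_prod_list_carrier, auto)
  have T: "T \<in> carrier_mat r r" "upper_triangular T" using Cons(2) by auto
  note u = upper_tri_mult[OF T(1) c T(2)]
  show ?case unfolding mat_prod_list_Cons using u Cons by auto
qed

lemma mat_prod_list_append: 
  assumes "\<forall>T\<in>set xs. T \<in> carrier_mat r r" "\<forall>T\<in>set ys. T \<in> carrier_mat r r"
  shows "mat_prod_list r (xs @ ys) = mat_prod_list r xs * mat_prod_list r ys"
  using assms
proof (induct xs)
  case Nil
  thus ?case using mat_prod_list_carrier[of ys r] by (simp add: mat_prod_list_def)
next
  case (Cons x xs)
  thus ?case using mat_prod_list_carrier[of ys r] mat_prod_list_carrier[of xs r]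
    by (simp add: mat_prod_list_Cons assoc_mult_mat[of x r r "mat_prod_list r xs" r "mat_prod_list r ys" r])
qed

lemma mat_prod_list_vec:
  assumes "\<forall>T\<in>set Ts. T \<in> carrier_mat r r \<and> (\<forall>w\<in>W. T *\<^sub>v w \<in> W)" "W \<subseteq> carrier_vec r" "w \<in> W"
  shows "mat_prod_list r Ts *\<^sub>v w \<in> W"
  using assms
proof (induct Ts arbitrary: w)
  case Nil
  thus ?case by (auto simp: mat_prod_list_def)
next
  case (Cons T Ts)
  have c: "mat_prod_list r Ts \<in> carrier_mat r r" using Cons(2) by (intro mat_prod_list_carrier, auto)
  have T: "T \<in> carrier_mat r r" using Cons(2) by auto
  have "(T * mat_prod_list r Ts) *\<^sub>v w = T *\<^sub>v (mat_prod_list r Ts *\<^sub>v w)"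
    using Cons(3,4) c T by (intro assoc_mult_mat_vec, auto)
  thus ?case unfolding mat_prod_list_Cons using Cons by auto
qed

lemma inv_mat_eq:
  assumes A: "A \<in> carrier_mat r r" and Ai: "Ai \<in> carrier_mat r r" and AAi: "A * Ai = 1\<^sub>m r"
  shows "inv_mat r A = Ai"
proof -
  have AiA: "Ai * A = 1\<^sub>m r" by (rule mat_mult_left_right_inverse[OF A Ai AAi])
  have "\<exists>B. B \<in> carrier_mat r r \<and> A * B = 1\<^sub>m r \<and> B * A = 1\<^sub>m r" using Ai AAi AiA by blast
  from someI_ex[OF this] have B: "inv_mat r A \<in> carrier_mat r r" "A * inv_mat r A = 1\<^sub>m r"
    unfolding inv_mat_def by auto
  have "inv_mat r A = (Ai * A) * inv_mat r A" using B by (simp add: AiA)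
  also have "\<dots> = Ai * (A * inv_mat r A)" using A Ai B by (simp)
  also have "\<dots> = Ai" using B Ai by simp
  finally show ?thesis .
qed

lemma GL_intro:
  assumes A: "A \<in> carrier_mat r r" and Ai: "Ai \<in> carrier_mat r r" and AAi: "A * Ai = 1\<^sub>m r"
  shows "A \<in> GL r"
proof -
  have AiA: "Ai * A = 1\<^sub>m r" by (rule mat_mult_left_right_inverse[OF A Ai AAi])
  show ?thesis unfolding GL_def invertible_mat_def inverts_mat_def square_mat.simps
    using A Ai AAi AiA by auto
qed

lemma GL_det:
  assumes "A \<in> GL r" shows "det A \<noteq> 0"
proof -
  from assms have A: "A \<in> carrier_mat r r" and "\<exists>B. inverts_mat A B \<and> inverts_mat B A"
    unfolding GL_def invertible_mat_def by auto
  then obtain B where AB: "A * B = 1\<^sub>m r" and BA: "B * A = 1\<^sub>m (dim_row B)"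
    unfolding inverts_mat_def by auto
  have B: "B \<in> carrier_mat r r" using AB BA A
    by (metis carrier_matD(1) carrier_matD(2) carrier_mat_triv index_mult_mat(3) index_one_mat(3))
  have "det A * det B = 1" using det_mult[OF A B] AB by simp
  thus ?thesis by auto
qed

lemma eig_list_prop:
  assumes "M \<in> carrier_mat r r"
  shows "char_poly M = (\<Prod>a\<leftarrow>eig_list M. [:-a, 1:])"
proof -
  from char_poly_factorized[OF assms] have "\<exists>xs. char_poly M = (\<Prod>a\<leftarrow>xs. [:-a, 1:])" by blast
  from someI_ex[OF this] show ?thesis unfolding eig_list_def .
qed

lemma schur_exists:
  fixes M :: "complex mat"
  assumes M: "M \<in> carrier_mat r r"
  shows "\<exists>T. T \<in> carrier_mat r r \<and> upper_triangular T \<and> similar_mat M T \<and> diag_mat T = eig_list M"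
proof -
  obtain B P Q where s: "schur_decomposition M (eig_list M) = (B,P,Q)" by (cases "schur_decomposition M (eig_list M)", auto)
  from schur_decomposition[OF M eig_list_prop[OF M] s]
  have w: "similar_mat_wit M B P Q" and u: "upper_triangular B" and d: "diag_mat B = eig_list M" by auto
  from w M have "B \<in> carrier_mat r r" unfolding similar_mat_wit_def Let_def by auto
  with w u d show ?thesis unfolding similar_mat_def by blast
qed

lemma diagm_mult: "diagm r f * diagm r g = diagm r (\<lambda>i. f i * g i)"
proof (rule eq_matI)
  fix i j assume i: "i < dim_row (diagm r (\<lambda>i. f i * g i))" and j: "j < dim_col (diagm r (\<lambda>i. f i * g i))"
  hence i: "i < r" and j: "j < r" by auto
  have "(diagm r f * diagm r g) $$ (i,j) = (\<Sum>k<r. diagm r f $$ (i,k) * diagm r g $$ (k,j))"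
    using i j by (auto simp: scalar_prod_def atLeast0LessThan)
  also have "\<dots> = (\<Sum>k<r. if k = i then (if i = j then f i * g i else 0) else 0)"
    by (rule sum.cong, auto simp: i j)
  also have "\<dots> = diagm r (\<lambda>i. f i * g i) $$ (i,j)" using i j by (simp add: sum.delta')
  finally show "(diagm r f * diagm r g) $$ (i,j) = diagm r (\<lambda>i. f i * g i) $$ (i,j)" .
qed auto

lemma diagm_upper: "upper_triangular (diagm r f)"
  by (rule upper_triangularI, auto)

lemma diagm_vec: "v \<in> carrier_vec r \<Longrightarrow> t < r \<Longrightarrow> (diagm r f *\<^sub>v v) $ t = f t * v $ t"
proof -
  assume v: "v \<in> carrier_vec r" and t: "t < r"
  have "(diagm r f *\<^sub>v v) $ t = (\<Sum>k<r. diagm r f $$ (t,k) * v $ k)"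
    using v t by (auto simp: scalar_prod_def atLeast0LessThan)
  also have "\<dots> = (\<Sum>k<r. if k = t then f t * v $ t else 0)" by (rule sum.cong, auto simp: t)
  also have "\<dots> = f t * v $ t" using t by (simp add: sum.delta')
  finally show ?thesis .
qed



lemma unit_in_W:
  assumes sub: "is_subspace r W" and inv: "\<forall>w\<in>W. diagm r b *\<^sub>v w \<in> W" and inj: "inj_on b {..<r}"
    and w: "w \<in> W" and k: "k < r" and wk: "w $ k \<noteq> 0"
  shows "unit_vec r k \<in> W"
proof -
  have Wc: "W \<subseteq> carrier_vec r" and add: "\<forall>v\<in>W. \<forall>u\<in>W. v + u \<in> W"
    and sm: "\<forall>c. \<forall>v\<in>W. c \<cdot>\<^sub>v v \<in> W" using sub unfolding is_subspace_def by auto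
  have main: "finite S \<Longrightarrow> S \<subseteq> {..<r} \<Longrightarrow> \<exists>v\<in>W. \<forall>t<r. v $ t = (\<Prod>l\<in>S. (b t - b l)) * w $ t" for S
  proof (induct S rule: finite_induct)
    case empty
    show ?case using w by auto
  next
    case (insert l S)
    then obtain v where v: "v \<in> W" and vt: "\<forall>t<r. v $ t = (\<Prod>l\<in>S. (b t - b l)) * w $ t" by auto
    have vc: "v \<in> carrier_vec r" using v Wc by auto
    define v' where "v' = diagm r b *\<^sub>v v + (- b l) \<cdot>\<^sub>v v"
    have "diagm r b *\<^sub>v v \<in> W" using inv v by blast
    moreover have "(- b l) \<cdot>\<^sub>v v \<in> W" using sm v by blast
    ultimately have "v' \<in> W" unfolding v'_def using add by blast
    moreover have "\<forall>t<r. v' $ t = (\<Prod>l\<in>insert l S. (b t - b l)) * w $ t"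
    proof (intro allI impI)
      fix t assume t: "t < r"
      have "v' $ t = b t * v $ t - b l * v $ t" unfolding v'_def using vc t diagm_vec[OF vc t] by simp
      also have "\<dots> = (\<Prod>l\<in>insert l S. (b t - b l)) * w $ t" using insert(1,2) vt t by (simp add: algebra_simps)
      finally show "v' $ t = (\<Prod>l\<in>insert l S. (b t - b l)) * w $ t" .
    qed
    ultimately show ?case by blast
  qed
  define S where "S = {..<r} - {k}"
  obtain v where v: "v \<in> W" and vt: "\<forall>t<r. v $ t = (\<Prod>l\<in>S. (b t - b l)) * w $ t"
    using main[of S] unfolding S_def by auto
  have vc: "v \<in> carrier_vec r" using v Wc by auto
  define c where "c = (\<Prod>l\<in>S. (b k - b l))"
  have c: "c \<noteq> 0" unfolding c_def S_def using inj k by (auto simp: inj_on_def)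
  have "unit_vec r k = (1 / (c * w $ k)) \<cdot>\<^sub>v v"
  proof (rule eq_vecI)
    fix t assume t: "t < dim_vec ((1 / (c * w $ k)) \<cdot>\<^sub>v v)"
    hence t: "t < r" using vc by auto
    show "unit_vec r k $ t = ((1 / (c * w $ k)) \<cdot>\<^sub>v v) $ t"
    proof (cases "t = k")
      case True thus ?thesis using vt t c wk vc unfolding c_def by auto
    next
      case False
      hence "t \<in> S" unfolding S_def using t by auto
      hence "(\<Prod>l\<in>S. (b t - b l)) = 0" unfolding S_def by (intro prod_zero, auto)
      thus ?thesis using vt t False vc k by (auto simp: unit_vec_def)
    qed
  qed (insert vc, auto)
  thus ?thesis using sm v by auto
qed

lemma nonzero_coord: "v \<in> carrier_vec r \<Longrightarrow> v \<noteq> 0\<^sub>v r \<Longrightarrow> \<exists>t<r. v $ t \<noteq> (0::complex)"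
proof (rule ccontr)
  assume v: "v \<in> carrier_vec r" "v \<noteq> 0\<^sub>v r" and "\<not> (\<exists>t<r. v $ t \<noteq> 0)"
  hence "v = 0\<^sub>v r" by (intro eq_vecI, auto)
  with v show False by simp
qed

lemma irred_core:
  fixes U P Q :: "complex mat"
  assumes sub: "is_subspace r W" and invB: "\<forall>w\<in>W. diagm r b *\<^sub>v w \<in> W"
    and invU: "\<forall>w\<in>W. U *\<^sub>v w \<in> W" and invP: "\<forall>w\<in>W. P *\<^sub>v w \<in> W"
    and inj: "inj_on b {..<r}" and U: "U \<in> carrier_mat r r" and P: "P \<in> carrier_mat r r"
    and Q: "Q \<in> carrier_mat r r" and QP: "Q * P = 1\<^sub>m r" and UP: "U * P = P * diagm r b"
    and ut: "upper_triangular U"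
    and Ud: "\<forall>s<r. U $$ (s,s) = b (if s = r - 1 then 0 else Suc s)"
  shows "W = {0\<^sub>v r} \<or> W = carrier_vec r"
proof -
  have Wc: "W \<subseteq> carrier_vec r" and add: "\<forall>v\<in>W. \<forall>u\<in>W. v + u \<in> W" and W0: "0\<^sub>v r \<in> W"
    and sm: "\<forall>c. \<forall>v\<in>W. c \<cdot>\<^sub>v v \<in> W" using sub unfolding is_subspace_def by auto
  have step: "unit_vec r (if j = 0 then r - 1 else j - 1) \<in> W" if j: "j < r" and ej: "unit_vec r j \<in> W" for j
  proof -
    define v where "v = P *\<^sub>v unit_vec r j"
    have vW: "v \<in> W" unfolding v_def using invP ej by auto
    have vc: "v \<in> carrier_vec r" unfolding v_def using P by auto
    have Qv: "Q *\<^sub>v v = unit_vec r j" unfolding v_def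
      using assoc_mult_mat_vec[OF Q P unit_vec_carrier, of j, symmetric] QP by auto
    have Q0: "Q *\<^sub>v 0\<^sub>v r = 0\<^sub>v r" using Q by (intro eq_vecI, auto simp: scalar_prod_def)
    have u0: "unit_vec r j \<noteq> (0\<^sub>v r :: complex vec)"
    proof
      assume a: "unit_vec r j = (0\<^sub>v r :: complex vec)"
      have "(1::complex) = unit_vec r j $ j" using j by simp
      also have "\<dots> = 0\<^sub>v r $ j" by (simp only: a)
      also have "\<dots> = 0" using j by simp
      finally show False by simp
    qed
    have "v \<noteq> 0\<^sub>v r"
    proof
      assume v0: "v = 0\<^sub>v r"
      have "unit_vec r j = Q *\<^sub>v v" using Qv by simp
      also have "\<dots> = 0\<^sub>v r" using Q0 v0 by simp
      finally show False using u0 by simp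
    qed
    then obtain t0 where t0: "t0 < r" "v $ t0 \<noteq> 0" using vc nonzero_coord by blast
    define s where "s = Max {t. t < r \<and> v $ t \<noteq> 0}"
    have fin: "finite {t. t < r \<and> v $ t \<noteq> 0}" by auto
    have sin: "s \<in> {t. t < r \<and> v $ t \<noteq> 0}" unfolding s_def using t0 by (intro Max_in[OF fin], auto)
    hence s: "s < r" "v $ s \<noteq> 0" by auto
    have above: "t < r \<Longrightarrow> s < t \<Longrightarrow> v $ t = 0" for t using Max_ge[OF fin, of t] unfolding s_def[symmetric] by force
    have Dv: "diagm r b *\<^sub>v unit_vec r j = b j \<cdot>\<^sub>v unit_vec r j"
      by (rule eq_vecI, auto simp: diagm_vec j)
    have "U *\<^sub>v v = (U * P) *\<^sub>v unit_vec r j" unfolding v_def using U P by simp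
    also have "\<dots> = P *\<^sub>v (diagm r b *\<^sub>v unit_vec r j)" unfolding UP using P by (intro assoc_mult_mat_vec[of _ r r _ r], auto)
    also have "\<dots> = b j \<cdot>\<^sub>v v" unfolding Dv v_def using mult_mat_vec[OF P] by simp
    finally have Uv: "U *\<^sub>v v = b j \<cdot>\<^sub>v v" .
    have "(U *\<^sub>v v) $ s = (\<Sum>t<r. U $$ (s,t) * v $ t)"
      using U vc s by (auto simp: scalar_prod_def atLeast0LessThan)
    also have "\<dots> = (\<Sum>t<r. if t = s then U $$ (s,s) * v $ s else 0)"
    proof (rule sum.cong[OF refl])
      fix t assume t: "t \<in> {..<r}"
      show "U $$ (s,t) * v $ t = (if t = s then U $$ (s,s) * v $ s else 0)"
      proof (cases "t < s")
        case True thus ?thesis using ut U s by auto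
      next
        case False thus ?thesis using above[of t] t by (cases "t = s", auto)
      qed
    qed
    also have "\<dots> = U $$ (s,s) * v $ s" using s by (simp add: sum.delta')
    finally have "U $$ (s,s) * v $ s = b j * v $ s" using Uv s vc by simp
    hence "U $$ (s,s) = b j" using s by simp
    hence "b (if s = r - 1 then 0 else Suc s) = b j" using Ud s by simp
    hence "(if s = r - 1 then 0 else Suc s) = j" using inj s j
      by (intro inj_onD[OF inj], auto)
    hence "s = (if j = 0 then r - 1 else j - 1)" using s by (auto split: if_splits)
    moreover have "unit_vec r s \<in> W" by (rule unit_in_W[OF sub invB inj vW s])
    ultimately show ?thesis by simp
  qed
  show ?thesis
  proof (cases "W = {0\<^sub>v r}")
    case False
    then obtain w where w: "w \<in> W" "w \<noteq> 0\<^sub>v r" using W0 by auto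
    have wc: "w \<in> carrier_vec r" using w Wc by auto
    then obtain k where k: "k < r" "w $ k \<noteq> 0" using w nonzero_coord by blast
    have ek: "unit_vec r k \<in> W" by (rule unit_in_W[OF sub invB inj w(1) k])
    have down: "unit_vec r (k - d) \<in> W" if "d \<le> k" for d
      using that
    proof (induct d)
      case 0
      show ?case using ek by simp
    next
      case (Suc d)
      have dk: "d \<le> k" using Suc.prems by simp
      have IH: "unit_vec r (k - d) \<in> W" using Suc.hyps[OF dk] .
      have kd: "k - d < r" using k(1) by simp
      have kd0: "(k - d = 0) = False" using Suc.prems by simp
      have "unit_vec r (if k - d = 0 then r - 1 else k - d - 1) \<in> W" by (rule step[OF kd IH])
      hence "unit_vec r (k - d - 1) \<in> W" unfolding kd0 if_False .
      moreover have eq: "k - Suc d = k - d - 1" by simp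
      ultimately show ?case by (simp only: eq)
    qed
    have e0: "unit_vec r 0 \<in> W" using down[of k] by simp
    have r0: "0 < r" using k by simp
    have rm1: "unit_vec r (r - 1) \<in> W" using step[OF r0 e0] by simp
    have down2: "unit_vec r (r - 1 - d) \<in> W" if "d < r" for d
      using that
    proof (induct d)
      case 0
      show ?case using rm1 by simp
    next
      case (Suc d)
      have dk: "d < r" using Suc.prems by simp
      have IH: "unit_vec r (r - 1 - d) \<in> W" using Suc.hyps[OF dk] .
      have kd: "r - 1 - d < r" using r0 by simp
      have kd0: "(r - 1 - d = 0) = False" using Suc.prems by simp
      have "unit_vec r (if r - 1 - d = 0 then r - 1 else r - 1 - d - 1) \<in> W" by (rule step[OF kd IH])
      hence "unit_vec r (r - 1 - d - 1) \<in> W" unfolding kd0 if_False .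
      moreover have eq: "r - 1 - Suc d = r - 1 - d - 1" by simp
      ultimately show ?case by (simp only: eq)
    qed
    have all: "unit_vec r t \<in> W" if t: "t < r" for t
    proof -
      have "unit_vec r (r - 1 - (r - 1 - t)) \<in> W" by (rule down2, insert t, simp)
      moreover have "r - 1 - (r - 1 - t) = t" using t by simp
      ultimately show ?thesis by simp
    qed
    have part: "m \<le> r \<Longrightarrow> vec r (\<lambda>t. if t < m then v $ t else 0) \<in> W" if v: "v \<in> carrier_vec r" for v m
    proof (induct m)
      case 0
      have "vec r (\<lambda>t. if t < 0 then v $ t else 0) = 0\<^sub>v r" by (rule eq_vecI, auto)
      thus ?case using W0 by simp
    next
      case (Suc m)
      have "vec r (\<lambda>t. if t < Suc m then v $ t else 0) = vec r (\<lambda>t. if t < m then v $ t else 0) + (v $ m) \<cdot>\<^sub>v unit_vec r m"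
        by (rule eq_vecI, auto simp: unit_vec_def less_Suc_eq)
      moreover have "vec r (\<lambda>t. if t < m then v $ t else 0) \<in> W" using Suc by simp
      moreover have "(v $ m) \<cdot>\<^sub>v unit_vec r m \<in> W" using all[of m] Suc(2) sm by simp
      ultimately show ?case using add by simp
    qed
    have "carrier_vec r \<subseteq> W"
    proof
      fix v :: "complex vec" assume v: "v \<in> carrier_vec r"
      have "v = vec r (\<lambda>t. if t < r then v $ t else 0)" using v by (intro eq_vecI, auto)
      thus "v \<in> W" using part[OF v, of r] by simp
    qed
    hence "W = carrier_vec r" using Wc by (intro equalityI)
    thus ?thesis by (rule disjI2)
  qed (rule disjI1)
qed



lemma det_GL:
  fixes A :: "complex mat"
  assumes A: "A \<in> carrier_mat r r" and d: "det A \<noteq> 0"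
  shows "A \<in> GL r"
proof -
  have "A \<in> Units (ring_mat TYPE(complex) r undefined)" by (rule det_non_zero_imp_unit[OF A d])
  then obtain B where B: "B \<in> carrier_mat r r" "A * B = 1\<^sub>m r"
    unfolding Units_def ring_mat_def by auto
  show ?thesis by (rule GL_intro[OF A B])
qed

lemma cancel_mat:
  fixes A B Z :: "complex mat"
  assumes A: "A \<in> carrier_mat r r" and B: "B \<in> carrier_mat r r" and Z: "Z \<in> carrier_mat r r"
    and AB: "A * B = 1\<^sub>m r"
  shows "A * (B * Z) = Z"
proof -
  have "A * (B * Z) = (A * B) * Z" using A B Z by simp
  thus ?thesis using AB Z by simp
qed

lemma mat_prod_list_ones:
  assumes "\<forall>T\<in>set ys. T \<in> carrier_mat r r"
  shows "mat_prod_list r (map (\<lambda>k. 1\<^sub>m r) xs @ ys) = mat_prod_list r ys"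
  using mat_prod_list_carrier[OF assms]
  by (induct xs, auto simp: mat_prod_list_Cons)

lemma assoc4:
  fixes A B C D :: "complex mat"
  assumes A: "A \<in> carrier_mat r r" and B: "B \<in> carrier_mat r r" and C: "C \<in> carrier_mat r r" and D: "D \<in> carrier_mat r r"
  shows "A * B * C * D = A * (B * (C * D))"
proof -
  have AB: "A * B \<in> carrier_mat r r" using A B by simp
  have CD: "C * D \<in> carrier_mat r r" using C D by simp
  have "A * B * C * D = (A * B) * (C * D)" by (rule assoc_mult_mat[OF AB C D])
  also have "\<dots> = A * (B * (C * D))" by (rule assoc_mult_mat[OF A B CD])
  finally show ?thesis .
qed

lemma assoc5:
  fixes A B C D E :: "complex mat"
  assumes A: "A \<in> carrier_mat r r" and B: "B \<in> carrier_mat r r" and C: "C \<in> carrier_mat r r"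
    and D: "D \<in> carrier_mat r r" and E: "E \<in> carrier_mat r r"
  shows "A * B * C * D * E = A * (B * (C * (D * E)))"
proof -
  have ABC: "A * B * C \<in> carrier_mat r r" using A B C by simp
  have DE: "D * E \<in> carrier_mat r r" using D E by simp
  have "A * B * C * D * E = (A * B * C) * (D * E)" by (rule assoc_mult_mat[OF ABC D E])
  also have "\<dots> = A * (B * (C * (D * E)))" by (rule assoc4[OF A B C DE])
  finally show ?thesis .
qed

theorem mainTheorem2:
  fixes n g r :: nat and M :: "nat \<Rightarrow> complex mat"
  assumes "n \<ge> 1" and "g \<ge> 1" and "r \<ge> 1"
    and M_GL: "\<forall>i<n. M i \<in> GL r"
    and generic: "mult_generic r n M"
    and det_one: "(\<Prod>i<n. det (M i)) = 1"
    and g1: "g = 1 \<longrightarrow> (\<exists>i<n. attached_partition (M i) \<noteq> {#r#})"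
  shows "\<exists>A B T :: nat \<Rightarrow> complex mat.
     (\<forall>k<g. A k \<in> GL r \<and> B k \<in> GL r) \<and>
     (\<forall>i<n. T i \<in> conj_class r (M i)) \<and>
     mat_prod_list r (map (\<lambda>k. commutator r (A k) (B k)) [0..<g] @ map T [0..<n]) = 1\<^sub>m r \<and>
     (\<forall>W. is_subspace r W \<and>
          common_invariant (A ` {..<g} \<union> B ` {..<g} \<union> T ` {..<n}) W
          \<longrightarrow> W = {0\<^sub>v r} \<or> W = carrier_vec r)"
proof -
  have g0: "0 < g" and r0: "0 < r" using assms(2,3) by auto
  have Mc: "\<And>i. i < n \<Longrightarrow> M i \<in> carrier_mat r r" using M_GL unfolding GL_def by auto
  define e where "e i = eig_list (M i)" for i
  have "\<forall>i. \<exists>T. i < n \<longrightarrow> (T \<in> carrier_mat r r \<and> upper_triangular T \<and> similar_mat (M i) T \<and> diag_mat T = e i)"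
    using schur_exists[OF Mc] unfolding e_def by blast
  from choice[OF this] obtain T where T: "\<And>i. i < n \<Longrightarrow> T i \<in> carrier_mat r r \<and> upper_triangular (T i) \<and> similar_mat (M i) (T i) \<and> diag_mat (T i) = e i"
    by blast
  have Tc: "\<And>i. i < n \<Longrightarrow> T i \<in> carrier_mat r r" using T by blast
  have Tu: "\<And>i. i < n \<Longrightarrow> upper_triangular (T i)" using T by blast
  have Ts: "\<And>i. i < n \<Longrightarrow> similar_mat (M i) (T i)" using T by blast
  have Td: "\<And>i. i < n \<Longrightarrow> diag_mat (T i) = e i" using T by blast
  have le: "length (e i) = r" if i: "i < n" for i
  proof -
    have "e i = diag_mat (T i)" using Td[OF i] by simp
    thus ?thesis using Tc[OF i] unfolding diag_mat_def by simp
  qed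
  have Tjj: "T i $$ (j,j) = e i ! j" if i: "i < n" and j: "j < r" for i j
  proof -
    have "e i = diag_mat (T i)" using Td[OF i] by simp
    thus ?thesis using Tc[OF i] j unfolding diag_mat_def by simp
  qed
  have detM: "det (M i) = (\<Prod>l<r. e i ! l)" if i: "i < n" for i
  proof -
    have "det (M i) = det (T i)" by (rule det_similar[OF Ts[OF i]])
    also have "\<dots> = prod_list (diag_mat (T i))" by (rule det_upper_triangular[OF Tu[OF i] Tc[OF i]])
    also have "\<dots> = prod_list (e i)" using Td[OF i] by simp
    also have "\<dots> = (\<Prod>l<r. e i ! l)" unfolding prod.list_conv_set_nth le[OF i] atLeast0LessThan ..
    finally show ?thesis .
  qed
  have enz: "e i ! j \<noteq> 0" if i: "i < n" and j: "j < r" for i j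
  proof
    assume "e i ! j = 0"
    hence "(\<Prod>l<r. e i ! l) = 0" using j by (intro prod_zero, auto)
    with detM[OF i] GL_det[of "M i" r] M_GL i show False by auto
  qed
  define X where "X = mat_prod_list r (map T [0..<n])"
  have allT: "\<forall>T'\<in>set (map T [0..<n]). T' \<in> carrier_mat r r \<and> upper_triangular T'" using Tc Tu by auto
  have Xc: "X \<in> carrier_mat r r" unfolding X_def by (rule mat_prod_list_carrier, insert allT, auto)
  note XU = mat_prod_list_upper[OF allT, folded X_def]
  have Xu: "upper_triangular X" using XU by blast
  define d where "d j = (\<Prod>i<n. e i ! j)" for j
  have Xd: "X $$ (j,j) = d j" if j: "j < r" for j
  proof -
    have "X $$ (j,j) = (\<Prod>T'\<leftarrow>map T [0..<n]. T' $$ (j,j))" using XU j by blast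
    also have "\<dots> = (\<Prod>i\<leftarrow>[0..<n]. T i $$ (j,j))" by (simp add: comp_def)
    also have "\<dots> = (\<Prod>i\<in>set [0..<n]. T i $$ (j,j))" by (subst prod.distinct_set_conv_list, auto)
    also have "\<dots> = (\<Prod>i<n. e i ! j)" using Tjj j by (auto simp: atLeast0LessThan intro!: prod.cong)
    finally show ?thesis unfolding d_def .
  qed
  have dnz: "d j \<noteq> 0" if j: "j < r" for j unfolding d_def using enz j by auto
  define b where "b j = (\<Prod>l<j. d l)" for j
  have bnz: "b j \<noteq> 0" if j: "j \<le> r" for j unfolding b_def using dnz j by auto
  have b0: "b 0 = 1" unfolding b_def by simp
  have bSuc: "b (Suc j) = b j * d j" for j unfolding b_def by simp
  have br: "b r = 1"
  proof -
    have "b r = (\<Prod>l<r. \<Prod>i<n. e i ! l)" unfolding b_def d_def ..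
    also have "\<dots> = (\<Prod>i<n. \<Prod>l<r. e i ! l)" by (rule prod.swap)
    also have "\<dots> = (\<Prod>i<n. det (M i))" using detM by auto
    finally show ?thesis using det_one by simp
  qed
  have G: "\<And>m \<Lambda>. 1 \<le> m \<and> m < r \<Longrightarrow> (\<forall>i<n. \<Lambda> i \<subseteq> {0..<r} \<and> card (\<Lambda> i) = m) \<Longrightarrow>
      (\<Prod>i<n. \<Prod>k\<in>\<Lambda> i. eig_list (M i) ! k) \<noteq> 1"
    using generic unfolding mult_generic_def by blast
  have bneq: "b j \<noteq> b k" if jk: "j < k" and k: "k < r" for j k
  proof
    assume eq: "b j = b k"
    have split: "{..<k} = {..<j} \<union> {j..<k}" using jk by auto
    have bk: "b k = b j * (\<Prod>l\<in>{j..<k}. d l)" unfolding b_def split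
      by (rule prod.union_disjoint, auto)
    have "b j * (\<Prod>l\<in>{j..<k}. d l) = b j * 1" using bk eq by simp
    moreover have "b j \<noteq> 0" using bnz[of j] jk k by simp
    ultimately have c1: "(\<Prod>l\<in>{j..<k}. d l) = 1" by simp
    have "(\<Prod>l\<in>{j..<k}. d l) = (\<Prod>i<n. \<Prod>l\<in>{j..<k}. e i ! l)" unfolding d_def by (rule prod.swap)
    with c1 have c2: "(\<Prod>i<n. \<Prod>l\<in>{j..<k}. eig_list (M i) ! l) = 1" unfolding e_def by simp
    have "1 \<le> k - j \<and> k - j < r" using jk k by auto
    moreover have "\<forall>i<n. (\<lambda>_. {j..<k}) i \<subseteq> {0..<r} \<and> card ((\<lambda>_. {j..<k}) i) = k - j" using k by auto
    ultimately have "(\<Prod>i<n. \<Prod>l\<in>(\<lambda>_. {j..<k}) i. eig_list (M i) ! l) \<noteq> 1"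
      by (rule G)
    with c2 show False by simp
  qed
  have binj: "inj_on b {..<r}"
  proof (rule inj_onI)
    fix j k assume j: "j \<in> {..<r}" and k: "k \<in> {..<r}" and eq: "b j = b k"
    show "j = k"
    proof (rule ccontr)
      assume "j \<noteq> k"
      hence "j < k \<or> k < j" by auto
      thus False using bneq[of j k] bneq[of k j] j k eq by auto
    qed
  qed
  define Bd where "Bd = diagm r b"
  define Bdi where "Bdi = diagm r (\<lambda>i. 1 / b i)"
  have Bdc: "Bd \<in> carrier_mat r r" and Bdic: "Bdi \<in> carrier_mat r r" unfolding Bd_def Bdi_def by auto
  have BB: "Bd * Bdi = 1\<^sub>m r" unfolding Bd_def Bdi_def diagm_mult
    by (rule eq_matI, insert bnz, auto)
  define U where "U = X * Bd"
  have Uc: "U \<in> carrier_mat r r" unfolding U_def using Xc Bdc by auto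
  note UU = upper_tri_mult[OF Xc Bdc Xu diagm_upper[of r b, folded Bd_def]]
  have Uu: "upper_triangular U" unfolding U_def by (rule UU(1))
  have Ud0: "U $$ (s,s) = b (Suc s)" if s: "s < r" for s
    unfolding U_def UU(2)[OF s] Xd[OF s] bSuc using s by (simp add: Bd_def)
  have Ud: "\<forall>s<r. U $$ (s,s) = b (if s = r - 1 then 0 else Suc s)"
  proof (intro allI impI)
    fix s assume s: "s < r"
    show "U $$ (s,s) = b (if s = r - 1 then 0 else Suc s)"
    proof (cases "s = r - 1")
      case True
      hence "Suc s = r" using s by simp
      thus ?thesis using Ud0[OF s] br b0 True by simp
    qed (simp add: Ud0[OF s])
  qed
  define bs where "bs = map b [0..<r]"
  have diagU: "diag_mat U = rotate1 bs"
  proof (rule nth_equalityI)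
    show "length (diag_mat U) = length (rotate1 bs)" using Uc unfolding diag_mat_def bs_def by simp
    fix s assume s: "s < length (diag_mat U)"
    hence s: "s < r" using Uc unfolding diag_mat_def by simp
    have "Suc s mod r = (if s = r - 1 then 0 else Suc s)" using s by auto
    hence "rotate1 bs ! s = b (if s = r - 1 then 0 else Suc s)"
      unfolding bs_def using s by (simp add: nth_rotate1)
    thus "diag_mat U ! s = rotate1 bs ! s" using Ud s Uc unfolding diag_mat_def by simp
  qed
  have dist: "distinct (diag_mat U)" unfolding diagU bs_def distinct1_rotate
    using binj by (simp add: distinct_map atLeast0LessThan lessThan_def)
  have ms: "mset bs = mset (diag_mat U)" unfolding diagU by (cases bs, auto)
  have "similar_mat U (diagm r (\<lambda>i. bs ! i))" by (rule upper_tri_distinct_sim[OF Uc Uu dist ms])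
  also have "diagm r (\<lambda>i. bs ! i) = Bd" unfolding Bd_def bs_def by (rule eq_matI, auto)
  finally have simU: "similar_mat U Bd" .
  from similar_matD[OF simU] obtain m P Q where
    PQ: "{U, Bd, P, Q} \<subseteq> carrier_mat m m" "P * Q = 1\<^sub>m m" "Q * P = 1\<^sub>m m" "U = P * Bd * Q" by blast
  have m: "m = r" using PQ(1) Uc by auto
  have Pc: "P \<in> carrier_mat r r" and Qc: "Q \<in> carrier_mat r r" using PQ(1) m by auto
  have PQ1: "P * Q = 1\<^sub>m r" and QP1: "Q * P = 1\<^sub>m r" using PQ m by auto
  have Ueq: "U = P * (Bd * Q)" using PQ(4) Pc Bdc Qc by simp
  have UP: "U * P = P * Bd"
  proof -
    have "U * P = P * (Bd * Q) * P" using Ueq by simp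
    also have "\<dots> = P * ((Bd * Q) * P)" using Pc Bdc Qc by (intro assoc_mult_mat[of _ r r _ r _ r], auto)
    also have "\<dots> = P * (Bd * (Q * P))" using Pc Bdc Qc by simp
    also have "\<dots> = P * Bd" using QP1 Bdc by simp
    finally show ?thesis .
  qed
  have Xeq: "X = P * (Bd * (Q * Bdi))"
  proof -
    have "U * Bdi = X * (Bd * Bdi)" unfolding U_def using Xc Bdc Bdic by simp
    hence "X = U * Bdi" using BB Xc by simp
    also have "\<dots> = P * ((Bd * Q) * Bdi)" unfolding Ueq using Pc Bdc Qc Bdic by (intro assoc_mult_mat[of _ r r _ r _ r], auto)
    also have "\<dots> = P * (Bd * (Q * Bdi))" using Pc Bdc Qc Bdic by simp
    finally show ?thesis .
  qed
  define A where "A (k::nat) = (if k = 0 then Bd else 1\<^sub>m r)" for k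
  define B where "B (k::nat) = (if k = 0 then P else 1\<^sub>m r)" for k
  have one_GL: "1\<^sub>m r \<in> GL r" by (rule GL_intro[of _ _ "1\<^sub>m r"], auto)
  have Bd_GL: "Bd \<in> GL r" by (rule GL_intro[OF Bdc Bdic BB])
  have P_GL: "P \<in> GL r" by (rule GL_intro[OF Pc Qc PQ1])
  have invBd: "inv_mat r Bd = Bdi" by (rule inv_mat_eq[OF Bdc Bdic BB])
  have invP: "inv_mat r P = Q" by (rule inv_mat_eq[OF Pc Qc PQ1])
  have inv1: "inv_mat r (1\<^sub>m r) = 1\<^sub>m r" by (rule inv_mat_eq, auto)
  have T_GL: "T i \<in> GL r" if i: "i < n" for i
  proof -
    have "det (T i) = det (M i)" using det_similar[OF Ts[OF i]] by simp
    moreover have "det (M i) \<noteq> 0" using GL_det M_GL i by auto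
    ultimately show ?thesis by (intro det_GL[OF Tc[OF i]], auto)
  qed
  have part1: "\<forall>k<g. A k \<in> GL r \<and> B k \<in> GL r" unfolding A_def B_def using one_GL Bd_GL P_GL by auto
  have part2: "\<forall>i<n. T i \<in> conj_class r (M i)" unfolding conj_class_def
    using T_GL Ts similar_mat_sym by blast
  have part3: "mat_prod_list r (map (\<lambda>k. commutator r (A k) (B k)) [0..<g] @ map T [0..<n]) = 1\<^sub>m r"
  proof -
    have upt: "[0..<g] = 0 # [1..<g]" using g0 by (simp add: upt_rec)
    have "map (\<lambda>k. commutator r (A k) (B k)) [1..<g] = map (\<lambda>k. 1\<^sub>m r) [1..<g]"
      by (rule map_cong, auto simp: A_def B_def commutator_def inv1)
    hence lst: "map (\<lambda>k. commutator r (A k) (B k)) [0..<g] @ map T [0..<n] =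
      commutator r Bd P # (map (\<lambda>k. 1\<^sub>m r) [1..<g] @ map T [0..<n])"
      unfolding upt by (simp add: A_def B_def)
    have Tl: "\<forall>T'\<in>set (map T [0..<n]). T' \<in> carrier_mat r r" using Tc by auto
    have "mat_prod_list r (map (\<lambda>k. commutator r (A k) (B k)) [0..<g] @ map T [0..<n])
       = commutator r Bd P * X"
      unfolding lst mat_prod_list_Cons mat_prod_list_ones[OF Tl] X_def ..
    also have "commutator r Bd P * X = Bd * (P * (Bdi * (Q * X)))" unfolding commutator_def invBd invP
      by (rule assoc5[OF Bdc Pc Bdic Qc Xc])
    also have "Q * X = Bd * (Q * Bdi)" unfolding Xeq by (rule cancel_mat[OF Qc Pc _ QP1], insert Bdc Qc Bdic, auto)
    also have "Bdi * (Bd * (Q * Bdi)) = Q * Bdi" by (rule cancel_mat[OF Bdic Bdc _ mat_mult_left_right_inverse[OF Bdc Bdic BB]], insert Qc Bdic, auto)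
    also have "P * (Q * Bdi) = Bdi" by (rule cancel_mat[OF Pc Qc Bdic PQ1])
    also have "Bd * Bdi = 1\<^sub>m r" by (rule BB)
    finally show ?thesis .
  qed
  have part4: "\<forall>W. is_subspace r W \<and>
          common_invariant (A ` {..<g} \<union> B ` {..<g} \<union> T ` {..<n}) W
          \<longrightarrow> W = {0\<^sub>v r} \<or> W = carrier_vec r"
  proof (intro allI impI)
    fix W assume a: "is_subspace r W \<and> common_invariant (A ` {..<g} \<union> B ` {..<g} \<union> T ` {..<n}) W"
    hence sub: "is_subspace r W" and ci: "common_invariant (A ` {..<g} \<union> B ` {..<g} \<union> T ` {..<n}) W" by auto
    have Wc: "W \<subseteq> carrier_vec r" using sub unfolding is_subspace_def by auto
    have Bd_in: "Bd \<in> A ` {..<g} \<union> B ` {..<g} \<union> T ` {..<n}" using g0 unfolding A_def by force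
    have P_in: "P \<in> A ` {..<g} \<union> B ` {..<g} \<union> T ` {..<n}" using g0 unfolding B_def by force
    have invBd': "\<forall>w\<in>W. diagm r b *\<^sub>v w \<in> W" using ci Bd_in unfolding common_invariant_def Bd_def by blast
    have invP': "\<forall>w\<in>W. P *\<^sub>v w \<in> W" using ci P_in unfolding common_invariant_def by blast
    have invT: "\<forall>T'\<in>set (map T [0..<n]). T' \<in> carrier_mat r r \<and> (\<forall>w\<in>W. T' *\<^sub>v w \<in> W)"
      using ci Tc unfolding common_invariant_def by auto
    have invX: "\<forall>w\<in>W. X *\<^sub>v w \<in> W" unfolding X_def using mat_prod_list_vec[OF invT Wc] by blast
    have invU: "\<forall>w\<in>W. U *\<^sub>v w \<in> W"
    proof
      fix w assume w: "w \<in> W"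
      have "U *\<^sub>v w = X *\<^sub>v (Bd *\<^sub>v w)" unfolding U_def using Xc Bdc w Wc by (intro assoc_mult_mat_vec, auto)
      thus "U *\<^sub>v w \<in> W" using invX invBd' w unfolding Bd_def by simp
    qed
    show "W = {0\<^sub>v r} \<or> W = carrier_vec r"
      by (rule irred_core[OF sub invBd' invU invP' binj Uc Pc Qc QP1 UP[unfolded Bd_def] Uu Ud])
  qed
  show ?thesis using part1 part2 part3 part4 by blast
qed


end
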